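(* Let $(X,d,\alpha)$ be a computable metric space which is locally computable. Let $S$ be a co-computably enumerable closed set in $(X,d,\alpha)$ which is compact. Then $S$ is a semi-computable compact set in $(X,d,\alpha)$.
   Context: A computable metric space is a triple $(X,d,\alpha)$ where $(X,d)$ is a metric space and $\alpha=(\alpha_i)_{i\in\mathbb N}$ is a sequence with dense range in $(X,d)$ such that $(i,j)\mapsto d(\alpha_i,\alpha_j)$ is a computable function $\mathbb N^2\to\mathbb R$ (a function $g:\mathbb N^k\to\mathbb R$ is computable if there is a computable $G:\mathbb N^{k+1}\to\mathbb Q$ with $|g(x)-G(x,i)|<2^{-i}$ for all $x,i$). Fix a computable $q:\mathbb N\to\mathbb Q$ whose image is the set of positive rationals and computable $\tau_1,\tau_2:\mathbb N\to\mathbb N$ with $\{(\tau_1(i),\tau_2(i)):i\in\mathbb N\}=\mathbb N^2$; let $\lambda_i=\alpha_{\tau_1(i)}$, $\rho_i=q_{\tau_2(i)}$, $I_i=B(\lambda_i,\rho_i)$ (open ball). Fix computable $\sigma:\mathbb N^2\to\mathbb N$, $\eta:\mathbb N\to\mathbb N$ such that $\{(\sigma(j,0),\dots,\sigma(j,\eta(j))):j\in\mathbb N\}$ is the set of all nonempty finite sequences in $\mathbb N$; let $[j]=\{\sigma(j,i):0\le i\le\eta(j)\}$ and $J_j=\bigcup_{i\in[j]}I_i$. A compact $K$ is semi-computable compact if $\{j: K\subseteq J_j\}$ is computably enumerable, and computable compact if additionally $\{i:K\cap I_i\neq\emptyset\}$ is computably enumerable. A closed set $S$ is co-computably enumerable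 closed if there is a computable $f:\mathbb N\to\mathbb N$ with $X\setminus S=\bigcup_{i\in\mathbb N}I_{f(i)}$. $(X,d,\alpha)$ is locally computable if every compact set in $(X,d)$ is contained in some computable compact set. *)

theory Defs
  imports "HOL-Analysis.Analysis"
begin

datatype recf =
    Zero
  | Succ
  | Proj nat
  | Comp recf "recf list"
  | PrimRec recf recf
  | Mu recf

inductive eval :: "recf \<Rightarrow> nat list \<Rightarrow> nat \<Rightarrow> bool" where
  eval_Zero: "eval Zero xs 0"
| eval_Succ: "eval Succ (x # xs) (Suc x)"
| eval_Proj: "i < length xs \<Longrightarrow> eval (Proj i) xs (xs ! i)"
| eval_Comp: "length ys = length gs \<Longrightarrow> (\<forall>k < length gs. eval (gs ! k) xs (ys ! k))
      \<Longrightarrow> eval f ys y \<Longrightarrow> eval (Comp f gs) xs y"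
| eval_Pr0: "eval f xs y \<Longrightarrow> eval (PrimRec f g) (0 # xs) y"
| eval_PrS: "eval (PrimRec f g) (n # xs) y \<Longrightarrow> eval g (y # n # xs) z
      \<Longrightarrow> eval (PrimRec f g) (Suc n # xs) z"
| eval_Mu: "eval f (n # xs) 0 \<Longrightarrow> (\<forall>m < n. \<exists>k. k > 0 \<and> eval f (m # xs) k)
      \<Longrightarrow> eval (Mu f) xs n"

definition computable_nat :: "nat \<Rightarrow> (nat list \<Rightarrow> nat) \<Rightarrow> bool" where
  "computable_nat k f \<longleftrightarrow> (\<exists>c. \<forall>xs. length xs = k \<longrightarrow> eval c xs (f xs))"

definition computable1 :: "(nat \<Rightarrow> nat) \<Rightarrow> bool" where
  "computable1 f \<longleftrightarrow> computable_nat 1 (\<lambda>xs. f (xs ! 0))"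

definition computable2 :: "(nat \<Rightarrow> nat \<Rightarrow> nat) \<Rightarrow> bool" where
  "computable2 f \<longleftrightarrow> computable_nat 2 (\<lambda>xs. f (xs ! 0) (xs ! 1))"

definition computable_rat :: "nat \<Rightarrow> (nat list \<Rightarrow> rat) \<Rightarrow> bool" where
  "computable_rat k g \<longleftrightarrow> (\<exists>s n d. computable_nat k s \<and> computable_nat k n \<and> computable_nat k d \<and>
      (\<forall>xs. length xs = k \<longrightarrow>
         g xs = (if s xs = 0 then 1 else -1) * of_nat (n xs) / of_nat (d xs)))"

definition computable_rat1 :: "(nat \<Rightarrow> rat) \<Rightarrow> bool" where
  "computable_rat1 g \<longleftrightarrow> computable_rat 1 (\<lambda>xs. g (xs ! 0))"

definition computable_real2 :: "(nat \<Rightarrow> nat \<Rightarrow> real) \<Rightarrow> bool" where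
  "computable_real2 g \<longleftrightarrow> (\<exists>G :: nat \<Rightarrow> nat \<Rightarrow> nat \<Rightarrow> rat.
      computable_rat 3 (\<lambda>xs. G (xs ! 0) (xs ! 1) (xs ! 2)) \<and>
      (\<forall>x y i. \<bar>g x y - real_of_rat (G x y i)\<bar> < 1 / 2 ^ i))"

definition ce_set :: "nat set \<Rightarrow> bool" where
  "ce_set A \<longleftrightarrow> (\<exists>c. \<forall>n. n \<in> A \<longleftrightarrow> (\<exists>y. eval c [n] y))"

definition computable_metric_space :: "(nat \<Rightarrow> 'a::metric_space) \<Rightarrow> bool" where
  "computable_metric_space \<alpha> \<longleftrightarrow> closure (range \<alpha>) = UNIV \<and>
      computable_real2 (\<lambda>i j. dist (\<alpha> i) (\<alpha> j))"

definition admissible_enums ::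
  "(nat \<Rightarrow> rat) \<Rightarrow> (nat \<Rightarrow> nat) \<Rightarrow> (nat \<Rightarrow> nat) \<Rightarrow> (nat \<Rightarrow> nat \<Rightarrow> nat) \<Rightarrow> (nat \<Rightarrow> nat) \<Rightarrow> bool" where
  "admissible_enums q \<tau>1 \<tau>2 \<sigma> \<eta> \<longleftrightarrow>
     computable_rat1 q \<and> range q = {r. r > 0} \<and>
     computable1 \<tau>1 \<and> computable1 \<tau>2 \<and> range (\<lambda>i. (\<tau>1 i, \<tau>2 i)) = UNIV \<and>
     computable2 \<sigma> \<and> computable1 \<eta> \<and>
     range (\<lambda>j. map (\<sigma> j) [0..<Suc (\<eta> j)]) = {xs. xs \<noteq> []}"

definition rball :: "(nat \<Rightarrow> 'a::metric_space) \<Rightarrow> (nat \<Rightarrow> rat) \<Rightarrow> (nat \<Rightarrow> nat) \<Rightarrow> (nat \<Rightarrow> nat)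
    \<Rightarrow> nat \<Rightarrow> 'a set" where
  "rball \<alpha> q \<tau>1 \<tau>2 i = ball (\<alpha> (\<tau>1 i)) (real_of_rat (q (\<tau>2 i)))"

definition rballs :: "(nat \<Rightarrow> 'a::metric_space) \<Rightarrow> (nat \<Rightarrow> rat) \<Rightarrow> (nat \<Rightarrow> nat) \<Rightarrow> (nat \<Rightarrow> nat)
    \<Rightarrow> (nat \<Rightarrow> nat \<Rightarrow> nat) \<Rightarrow> (nat \<Rightarrow> nat) \<Rightarrow> nat \<Rightarrow> 'a set" where
  "rballs \<alpha> q \<tau>1 \<tau>2 \<sigma> \<eta> j = (\<Union>i \<in> {\<sigma> j k | k. k \<le> \<eta> j}. rball \<alpha> q \<tau>1 \<tau>2 i)"

definition semi_computable_compact where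
  "semi_computable_compact \<alpha> q \<tau>1 \<tau>2 \<sigma> \<eta> K \<longleftrightarrow>
     compact K \<and> ce_set {j. K \<subseteq> rballs \<alpha> q \<tau>1 \<tau>2 \<sigma> \<eta> j}"

definition computable_compact where
  "computable_compact \<alpha> q \<tau>1 \<tau>2 \<sigma> \<eta> K \<longleftrightarrow>
     semi_computable_compact \<alpha> q \<tau>1 \<tau>2 \<sigma> \<eta> K \<and>
     ce_set {i. K \<inter> rball \<alpha> q \<tau>1 \<tau>2 i \<noteq> {}}"

definition co_ce_closed where
  "co_ce_closed \<alpha> q \<tau>1 \<tau>2 S \<longleftrightarrow> closed S \<and>
     (\<exists>f. computable1 f \<and> - S = (\<Union>i. rball \<alpha> q \<tau>1 \<tau>2 (f i)))"

definition locally_computable where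
  "locally_computable \<alpha> q \<tau>1 \<tau>2 \<sigma> \<eta> \<longleftrightarrow>
     (\<forall>K. compact K \<longrightarrow> (\<exists>L. computable_compact \<alpha> q \<tau>1 \<tau>2 \<sigma> \<eta> L \<and> K \<subseteq> L))"

end

theory Submission
  imports Defs
begin


inductive_cases evZeroE: "eval Zero xs y"
inductive_cases evSuccE: "eval Succ xs y"
inductive_cases evProjE: "eval (Proj i) xs y"
inductive_cases evCompE: "eval (Comp f gs) xs y"
inductive_cases evPrE: "eval (PrimRec f g) xs y"
inductive_cases evMuE: "eval (Mu f) xs y"

lemma eval_det: "eval c xs y \<Longrightarrow> eval c xs y' \<Longrightarrow> y = y'"
proof (induction arbitrary: y' rule: eval.induct)
  case (eval_Zero xs) then show ?case by (auto elim: evZeroE)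
next
  case (eval_Succ x xs) then show ?case by (auto elim: evSuccE)
next
  case (eval_Proj i xs) then show ?case by (auto elim: evProjE)
next
  case (eval_Comp ys gs xs f y)
  from eval_Comp.prems obtain ys' where l: "length ys' = length gs"
    and a: "\<forall>k<length gs. eval (gs ! k) xs (ys' ! k)" and b: "eval f ys' y'"
    by (auto elim: evCompE)
  have h: "\<forall>k<length gs. eval (gs ! k) xs (ys ! k) \<and> (\<forall>y'. eval (gs!k) xs y' \<longrightarrow> ys!k = y')"
    using eval_Comp.IH(1) by simp
  have "ys = ys'"
  proof (rule nth_equalityI)
    show "length ys = length ys'" using l eval_Comp(1) by simp
    fix i assume "i < length ys"
    then have "i < length gs" using eval_Comp.hyps(1) by simp
    then show "ys ! i = ys' ! i" using h a by blast
  qed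
  then show ?case using eval_Comp.IH(2) b by blast
next
  case (eval_Pr0 f xs y)
  from eval_Pr0.prems show ?case
    by (rule evPrE) (use eval_Pr0.IH in auto)
next
  case (eval_PrS f g n xs y z)
  from eval_PrS.prems show ?case
    by (rule evPrE) (use eval_PrS.IH in auto)
next
  case (eval_Mu f n xs)
  from eval_Mu.prems have e: "eval f (y' # xs) 0"
    and c: "\<forall>m<y'. \<exists>k>0. eval f (m # xs) k" by (auto elim: evMuE)
  have IH2: "\<forall>m<n. \<exists>k>0. eval f (m # xs) k \<and> (\<forall>y'. eval f (m # xs) y' \<longrightarrow> k = y')"
    using eval_Mu.IH(2) by simp
  show ?case
  proof (rule linorder_cases[of n y'])
    assume "n < y'" then obtain k where k: "k>0" "eval f (n # xs) k" using c by blast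
    have "0 = k" using eval_Mu.IH(1) k(2) by blast
    then show ?thesis using k(1) by simp
  next
    assume "y' < n" then obtain k where k: "k>0" "\<forall>y''. eval f (y' # xs) y'' \<longrightarrow> k = y''"
      using IH2 by blast
    then show ?thesis using e by force
  qed
qed


definition tot :: "nat \<Rightarrow> recf \<Rightarrow> (nat list \<Rightarrow> nat) \<Rightarrow> bool" where
  "tot k c F \<longleftrightarrow> (\<forall>xs. length xs = k \<longrightarrow> eval c xs (F xs))"

lemma totD: "tot k c F \<Longrightarrow> length xs = k \<Longrightarrow> eval c xs (F xs)"
  by (simp add: tot_def)

lemma tot_cong: "tot k c F \<Longrightarrow> (\<And>xs. length xs = k \<Longrightarrow> F xs = G xs) \<Longrightarrow> tot k c G"
  by (simp add: tot_def)

lemma tot_zero: "tot k Zero (\<lambda>_. 0)"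
  by (simp add: tot_def eval_Zero)

lemma tot_proj: "i < k \<Longrightarrow> tot k (Proj i) (\<lambda>xs. xs ! i)"
  by (simp add: tot_def eval_Proj)

lemma tot_comp:
  assumes "tot m f F" "length gs = m" "list_all2 (\<lambda>g G. tot k g G) gs Gs"
  shows "tot k (Comp f gs) (\<lambda>xs. F (map (\<lambda>G. G xs) Gs))"
  unfolding tot_def
proof (intro allI impI)
  fix xs :: "nat list" assume l: "length xs = k"
  have lg: "length Gs = length gs" using assms(3) by (simp add: list_all2_lengthD)
  show "eval (Comp f gs) xs (F (map (\<lambda>G. G xs) Gs))"
  proof (rule eval_Comp)
    show "length (map (\<lambda>G. G xs) Gs) = length gs" using lg by simp
    show "\<forall>i<length gs. eval (gs ! i) xs (map (\<lambda>G. G xs) Gs ! i)"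
      using assms(3) l lg by (auto simp: list_all2_conv_all_nth tot_def)
    show "eval f (map (\<lambda>G. G xs) Gs) (F (map (\<lambda>G. G xs) Gs))"
      using assms(1,2) lg by (simp add: tot_def)
  qed
qed

lemma tot_Succ: "tot 1 Succ (\<lambda>xs. Suc (xs!0))"
  unfolding tot_def by (auto simp: length_Suc_conv intro: eval_Succ)

lemma tot_succ: "tot k c F \<Longrightarrow> tot k (Comp Succ [c]) (\<lambda>xs. Suc (F xs))"
  using tot_comp[OF tot_Succ, of "[c]" k "[F]"] by simp

lemma tot_primrec:
  assumes f: "tot k f F" and g: "tot (Suc (Suc k)) g G"
  shows "tot (Suc k) (PrimRec f g) (\<lambda>xs. rec_nat (F (tl xs)) (\<lambda>i y. G (y # i # tl xs)) (hd xs))"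
  unfolding tot_def
proof (intro allI impI)
  fix xs :: "nat list" assume l: "length xs = Suc k"
  then obtain n ys where xs: "xs = n # ys" and ly: "length ys = k" by (cases xs) auto
  have "eval (PrimRec f g) (n # ys) (rec_nat (F ys) (\<lambda>i y. G (y # i # ys)) n)"
  proof (induction n)
    case 0 then show ?case using f ly by (simp add: tot_def eval_Pr0)
  next
    case (Suc n) then show ?case using g ly by (auto simp: tot_def intro: eval_PrS)
  qed
  then show "eval (PrimRec f g) xs (rec_nat (F (tl xs)) (\<lambda>i y. G (y # i # tl xs)) (hd xs))"
    by (simp add: xs)
qed


fun e_const :: "nat \<Rightarrow> recf" where
  "e_const 0 = Zero" | "e_const (Suc n) = Comp Succ [e_const n]"

lemma tot_const: "tot k (e_const n) (\<lambda>_. n)"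
  by (induction n) (auto intro: tot_zero dest: tot_succ)

lemma tot_one: "tot k (Comp Succ [Zero]) (\<lambda>xs. Suc 0)"
  using tot_const[of k 1] by simp

lemma len2: "length xs = 2 \<Longrightarrow> xs = [xs!0, xs!1]"
  by (cases xs; cases "tl xs"; simp)

lemma len1: "length xs = Suc 0 \<Longrightarrow> xs = [xs!0]"
  by (cases xs; simp)

lemma map_nth_drop: "map (nth xs) [a..<length xs] = drop a xs"
  by (rule nth_equalityI) auto

lemma all2_projs: "b \<le> n \<Longrightarrow> list_all2 (\<lambda>g G. tot n g G) (map Proj [a..<b]) (map (\<lambda>i xs. xs!i) [a..<b])"
  by (auto simp: list_all2_conv_all_nth intro: tot_proj)

definition "c_add = PrimRec (Proj 0) (Comp Succ [Proj 0])"

lemma rec_add: "rec_nat b (\<lambda>i y. Suc y) a = a + b"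
  by (induction a) auto

lemma tot_c_add: "tot 2 c_add (\<lambda>xs. xs!0 + xs!1)"
proof -
  have "tot (Suc (Suc (Suc 0))) (Comp Succ [Proj 0]) (\<lambda>xs. Suc (xs!0))"
    by (rule tot_succ) (rule tot_proj, simp)
  from tot_primrec[OF tot_proj[of 0 "Suc 0"] this] have
    "tot (Suc (Suc 0)) c_add (\<lambda>xs. rec_nat (tl xs ! 0) (\<lambda>i y. Suc y) (hd xs))"
    by (simp add: c_add_def)
  then show ?thesis unfolding numeral_2_eq_2 One_nat_def
    by (rule tot_cong) (auto simp: rec_add length_Suc_conv)
qed

definition "e_add a b = Comp c_add [a, b]"

lemma tot_add: "tot k a A \<Longrightarrow> tot k b B \<Longrightarrow> tot k (e_add a b) (\<lambda>xs. A xs + B xs)"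
  unfolding e_add_def using tot_comp[OF tot_c_add, of "[a,b]" k "[A,B]"] by simp

definition "c_mult = PrimRec Zero (e_add (Proj 0) (Proj 2))"

lemma rec_mult: "rec_nat 0 (\<lambda>i y. y + b) a = a * b"
  by (induction a) auto

lemma tot_c_mult: "tot 2 c_mult (\<lambda>xs. xs!0 * xs!1)"
proof -
  have "tot (Suc (Suc (Suc 0))) (e_add (Proj 0) (Proj 2)) (\<lambda>xs. xs!0 + xs!2)"
    by (rule tot_add; rule tot_proj; simp)
  from tot_primrec[OF tot_zero this] have
    "tot (Suc (Suc 0)) c_mult (\<lambda>xs. rec_nat 0 (\<lambda>i y. y + tl xs ! 0) (hd xs))"
    by (simp add: c_mult_def)
  then show ?thesis unfolding numeral_2_eq_2 One_nat_def
    by (rule tot_cong) (auto simp: rec_mult length_Suc_conv)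
qed

definition "e_mult a b = Comp c_mult [a, b]"

lemma tot_mult: "tot k a A \<Longrightarrow> tot k b B \<Longrightarrow> tot k (e_mult a b) (\<lambda>xs. A xs * B xs)"
  unfolding e_mult_def using tot_comp[OF tot_c_mult, of "[a,b]" k "[A,B]"] by simp

lemma rec_pred: "rec_nat 0 (\<lambda>i y. i) a = a - Suc 0"
  by (cases a) auto

definition "c_pred = PrimRec Zero (Proj 1)"

lemma tot_c_pred: "tot 1 c_pred (\<lambda>xs. xs!0 - 1)"
proof -
  from tot_primrec[OF tot_zero tot_proj[of 1 "Suc (Suc 0)"]] have
    "tot (Suc 0) c_pred (\<lambda>xs. rec_nat 0 (\<lambda>i y. i) (hd xs))"
    by (simp add: c_pred_def)
  then show ?thesis unfolding numeral_2_eq_2 One_nat_def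
    by (rule tot_cong) (auto simp: rec_pred length_Suc_conv)
qed

definition "c_sub = PrimRec (Proj 0) (Comp c_pred [Proj 0])"

lemma rec_sub: "rec_nat b (\<lambda>i y. y - Suc 0) a = b - a"
  by (induction a) auto

lemma tot_c_sub: "tot 2 c_sub (\<lambda>xs. xs!1 - xs!0)"
proof -
  have "tot (Suc (Suc (Suc 0))) (Comp c_pred [Proj 0]) (\<lambda>xs. xs!0 - 1)"
    using tot_comp[OF tot_c_pred, of "[Proj 0]" "Suc (Suc (Suc 0))" "[\<lambda>xs. xs!0]"] tot_proj[of 0 "Suc (Suc (Suc 0))"]
    by simp
  from tot_primrec[OF tot_proj[of 0 "Suc 0"] this] have
    "tot (Suc (Suc 0)) c_sub (\<lambda>xs. rec_nat (tl xs ! 0) (\<lambda>i y. y - 1) (hd xs))"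
    by (simp add: c_sub_def)
  then show ?thesis unfolding numeral_2_eq_2 One_nat_def
    by (rule tot_cong) (auto simp: rec_sub length_Suc_conv)
qed

definition "e_sub a b = Comp c_sub [b, a]"

lemma tot_sub: "tot k a A \<Longrightarrow> tot k b B \<Longrightarrow> tot k (e_sub a b) (\<lambda>xs. A xs - B xs)"
  unfolding e_sub_def using tot_comp[OF tot_c_sub, of "[b,a]" k "[B,A]"] by simp

definition "e_sg a = e_sub (e_const 1) (e_sub (e_const 1) a)"

lemma tot_sg: "tot k a A \<Longrightarrow> tot k (e_sg a) (\<lambda>xs. if A xs = 0 then 0 else 1)"
  unfolding e_sg_def
  by (rule tot_cong, (rule tot_sub tot_const | assumption)+) auto

definition "e_eq a b = e_sub (e_const 1) (e_sg (e_add (e_sub a b) (e_sub b a)))"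

lemma tot_eq: "tot k a A \<Longrightarrow> tot k b B \<Longrightarrow> tot k (e_eq a b) (\<lambda>xs. if A xs = B xs then 1 else 0)"
  unfolding e_eq_def
  by (rule tot_cong, (rule tot_sub tot_const tot_sg tot_add | assumption)+) auto



lemma tot_shift: "tot (Suc k) g G \<Longrightarrow> tot (Suc (Suc k)) (Comp g (map Proj [1..<Suc (Suc k)])) (\<lambda>xs. G (tl xs))"
proof -
  assume g: "tot (Suc k) g G"
  have "tot (Suc (Suc k)) (Comp g (map Proj [1..<Suc (Suc k)]))
     (\<lambda>xs. G (map (\<lambda>G. G xs) (map (\<lambda>i xs. xs!i) [1..<Suc (Suc k)])))"
    apply (rule tot_comp[OF g])
     apply simp
    by (rule all2_projs) simp
  then show ?thesis
  proof (rule tot_cong)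
    fix xs :: "nat list" assume "length xs = Suc (Suc k)"
    then have "map (\<lambda>G. G xs) (map (\<lambda>i xs. xs!i) [1..<Suc (Suc k)]) = drop 1 xs"
      using map_nth_drop[of xs 1] by (simp add: comp_def)
    then show "G (map (\<lambda>G. G xs) (map (\<lambda>i xs. xs!i) [1..<Suc (Suc k)])) = G (tl xs)"
      by (simp add: drop_Suc)
  qed
qed

lemma rec_sum: "rec_nat 0 (\<lambda>i y. y + H i) n = (\<Sum>m<n. H m)"
  by (induction n) auto

lemma rec_prod: "rec_nat (Suc 0) (\<lambda>i y. y * H i) n = (\<Prod>m<n. H m)"
  by (induction n) auto

definition "c_bsum k g = PrimRec Zero (e_add (Proj 0) (Comp g (map Proj [1..<Suc (Suc k)])))"

lemma tot_c_bsum: "tot (Suc k) g G \<Longrightarrow> tot (Suc k) (c_bsum k g) (\<lambda>xs. \<Sum>m<hd xs. G (m # tl xs))"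
proof -
  assume g: "tot (Suc k) g G"
  have "tot (Suc (Suc k)) (e_add (Proj 0) (Comp g (map Proj [1..<Suc (Suc k)]))) (\<lambda>xs. xs!0 + G (tl xs))"
    by (rule tot_add[OF tot_proj tot_shift[OF g]]) simp
  from tot_primrec[OF tot_zero this] show ?thesis
    unfolding c_bsum_def by (rule tot_cong) (simp add: rec_sum)
qed

definition "c_bprod k g = PrimRec (e_const 1) (e_mult (Proj 0) (Comp g (map Proj [1..<Suc (Suc k)])))"

lemma tot_c_bprod: "tot (Suc k) g G \<Longrightarrow> tot (Suc k) (c_bprod k g) (\<lambda>xs. \<Prod>m<hd xs. G (m # tl xs))"
proof -
  assume g: "tot (Suc k) g G"
  have "tot (Suc (Suc k)) (e_mult (Proj 0) (Comp g (map Proj [1..<Suc (Suc k)]))) (\<lambda>xs. xs!0 * G (tl xs))"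
    by (rule tot_mult[OF tot_proj tot_shift[OF g]]) simp
  from tot_primrec[OF tot_const this] show ?thesis
    unfolding c_bprod_def by (rule tot_cong) (simp add: rec_prod)
qed

lemma tot_projs_b:
  assumes "tot k b B" "tot (Suc k) c C"
  shows "tot k (Comp c (b # map Proj [0..<k])) (\<lambda>xs. C (B xs # xs))"
proof -
  have "tot k (Comp c (b # map Proj [0..<k])) (\<lambda>xs. C (map (\<lambda>G. G xs) (B # map (\<lambda>i xs. xs!i) [0..<k])))"
    by (rule tot_comp[OF assms(2)]) (auto intro: all2_projs assms(1))
  then show ?thesis
  proof (rule tot_cong)
    fix xs :: "nat list" assume l: "length xs = k"
    have "map (\<lambda>i. xs!i) [0..<length xs] = xs" by (rule map_nth)
    then show "C (map (\<lambda>G. G xs) (B # map (\<lambda>i xs. xs!i) [0..<k])) = C (B xs # xs)"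
      using l by (simp add: comp_def)
  qed
qed

definition "e_bsum k b g = Comp (c_bsum k g) (b # map Proj [0..<k])"
definition "e_bprod k b g = Comp (c_bprod k g) (b # map Proj [0..<k])"

lemma tot_bsum: "tot k b B \<Longrightarrow> tot (Suc k) g G \<Longrightarrow> tot k (e_bsum k b g) (\<lambda>xs. \<Sum>m<B xs. G (m # xs))"
proof -
  assume a: "tot k b B" "tot (Suc k) g G"
  show ?thesis unfolding e_bsum_def by (rule tot_cong[OF tot_projs_b[OF a(1) tot_c_bsum[OF a(2)]]]) simp
qed

lemma tot_bprod: "tot k b B \<Longrightarrow> tot (Suc k) g G \<Longrightarrow> tot k (e_bprod k b g) (\<lambda>xs. \<Prod>m<B xs. G (m # xs))"
proof -
  assume a: "tot k b B" "tot (Suc k) g G"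
  show ?thesis unfolding e_bprod_def by (rule tot_cong[OF tot_projs_b[OF a(1) tot_c_bprod[OF a(2)]]]) simp
qed


lemma tot_comp_app:
  assumes c: "tot m c C" and es: "list_all2 (tot K) es Es" and m: "m = length es + (K - a)" and a: "a \<le> K"
  shows "tot K (Comp c (es @ map Proj [a..<K])) (\<lambda>xs. C (map (\<lambda>E. E xs) Es @ drop a xs))"
proof -
  have "tot K (Comp c (es @ map Proj [a..<K])) (\<lambda>xs. C (map (\<lambda>G. G xs) (Es @ map (\<lambda>i xs. xs!i) [a..<K])))"
  proof (rule tot_comp[OF c])
    show "length (es @ map Proj [a..<K]) = m" using m by simp
    show "list_all2 (\<lambda>g G. tot K g G) (es @ map Proj [a..<K]) (Es @ map (\<lambda>i xs. xs!i) [a..<K])"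
      by (rule list_all2_appendI) (use es all2_projs[of K K a] in auto)
  qed
  then show ?thesis
  proof (rule tot_cong)
    fix xs :: "nat list" assume "length xs = K"
    then have "map (\<lambda>G. G xs) (map (\<lambda>i xs. xs!i) [a..<K]) = drop a xs"
      using map_nth_drop[of xs a] by (simp add: comp_def)
    then show "C (map (\<lambda>G. G xs) (Es @ map (\<lambda>i xs. xs!i) [a..<K])) = C (map (\<lambda>E. E xs) Es @ drop a xs)"
      by simp
  qed
qed

definition nf :: "recf \<Rightarrow> nat \<Rightarrow> (nat list \<Rightarrow> nat) \<Rightarrow> bool" where
  "nf c k F \<longleftrightarrow> (\<forall>t xs y. length xs = k \<longrightarrow> F (t#xs) = Suc y \<longrightarrow> eval c xs y)
     \<and> (\<forall>xs y. length xs = k \<longrightarrow> eval c xs y \<longrightarrow> (\<exists>t. F (t#xs) \<noteq> 0))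
     \<and> (\<forall>t t' xs. length xs = k \<longrightarrow> F (t#xs) \<noteq> 0 \<longrightarrow> t \<le> t' \<longrightarrow> F (t'#xs) \<noteq> 0)"

lemma nf_sound: "nf c k F \<Longrightarrow> length xs = k \<Longrightarrow> F (t#xs) = Suc y \<Longrightarrow> eval c xs y"
  unfolding nf_def by blast

lemma nf_val: "nf c k F \<Longrightarrow> length xs = k \<Longrightarrow> F (t#xs) \<noteq> 0 \<Longrightarrow> eval c xs y \<Longrightarrow> F (t#xs) = Suc y"
  by (metis nf_sound eval_det not0_implies_Suc)

lemma nf_mono: "nf c k F \<Longrightarrow> length xs = k \<Longrightarrow> F (t#xs) \<noteq> 0 \<Longrightarrow> t \<le> t' \<Longrightarrow> F (t'#xs) \<noteq> 0"
  unfolding nf_def by blast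

lemma nf_mono_eq: "nf c k F \<Longrightarrow> length xs = k \<Longrightarrow> F (t#xs) \<noteq> 0 \<Longrightarrow> t \<le> t' \<Longrightarrow> F (t'#xs) = F (t#xs)"
  by (metis nf_mono nf_sound nf_val not0_implies_Suc)

lemma nf_ev: "nf c k F \<Longrightarrow> length xs = k \<Longrightarrow> eval c xs y \<Longrightarrow> \<exists>t0. \<forall>t\<ge>t0. F (t#xs) = Suc y"
proof -
  assume a: "nf c k F" "length xs = k" "eval c xs y"
  then obtain t0 where "F (t0#xs) \<noteq> 0" unfolding nf_def by blast
  then show ?thesis using a by (metis nf_mono nf_val)
qed

lemma ev_all: "(\<forall>i<(n::nat). \<exists>t0. \<forall>t\<ge>t0. P i t) \<Longrightarrow> \<exists>t0::nat. \<forall>t\<ge>t0. \<forall>i<n. P i t"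
proof (induction n)
  case 0 then show ?case by auto
next
  case (Suc n)
  then obtain t1 where t1: "\<forall>t\<ge>t1. \<forall>i<n. P i t" by auto
  obtain t2 where t2: "\<forall>t\<ge>t2. P n t" using Suc.prems by auto
  show ?case by (rule exI[of _ "max t1 t2"]) (use t1 t2 less_Suc_eq in auto)
qed

definition NF :: "recf \<Rightarrow> bool" where
  "NF c \<longleftrightarrow> (\<forall>k. \<exists>h F. tot (Suc k) h F \<and> nf c k F)"

lemma NF_Zero: "NF Zero"
  unfolding NF_def
proof
  fix k show "\<exists>h F. tot (Suc k) h F \<and> nf Zero k F"
    by (rule exI[of _ "e_const 1"], rule exI[of _ "\<lambda>_. 1"])
      (use tot_const[of "Suc k" 1] in \<open>auto simp: nf_def intro: eval_Zero\<close>)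
qed

lemma nf_never: "(\<And>xs y. length xs = k \<Longrightarrow> \<not> eval c xs y) \<Longrightarrow> \<exists>h F. tot (Suc k) h F \<and> nf c k F"
  by (rule exI[of _ Zero], rule exI[of _ "\<lambda>_. 0"]) (auto simp: tot_zero nf_def)

lemma NF_Succ: "NF Succ"
  unfolding NF_def
proof
  fix k show "\<exists>h F. tot (Suc k) h F \<and> nf Succ k F"
  proof (cases k)
    case 0 then show ?thesis by (intro nf_never) (auto elim: evSuccE)
  next
    case (Suc k')
    have "tot (Suc k) (Comp Succ [Comp Succ [Proj 1]]) (\<lambda>xs. Suc (Suc (xs!1)))"
      using Suc by (intro tot_succ tot_proj) simp
    moreover have "nf Succ k (\<lambda>xs. Suc (Suc (xs!1)))"
      using Suc by (auto simp: nf_def length_Suc_conv intro: eval_Succ)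
    ultimately show ?thesis by blast
  qed
qed

lemma NF_Proj: "NF (Proj i)"
  unfolding NF_def
proof
  fix k show "\<exists>h F. tot (Suc k) h F \<and> nf (Proj i) k F"
  proof (cases "i < k")
    case False then show ?thesis by (intro nf_never) (auto elim: evProjE)
  next
    case True
    have "tot (Suc k) (Comp Succ [Proj (Suc i)]) (\<lambda>xs. Suc (xs!Suc i))"
      using True by (intro tot_succ tot_proj) simp
    moreover have "nf (Proj i) k (\<lambda>xs. Suc (xs!Suc i))"
      using True by (auto simp: nf_def intro: eval_Proj)
    ultimately show ?thesis by blast
  qed
qed


fun prodl :: "recf list \<Rightarrow> recf" where
  "prodl [] = e_const 1" | "prodl (c # cs) = e_mult c (prodl cs)"

lemma tot_prodl: "list_all2 (tot K) cs Gs \<Longrightarrow> tot K (prodl cs) (\<lambda>xs. prod_list (map (\<lambda>G. G xs) Gs))"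
proof (induction rule: list_all2_induct)
  case Nil then show ?case using tot_const[of K 1] by simp
next
  case (Cons c G cs Gs) then show ?case by (simp add: tot_mult)
qed

lemma all2_pred: "list_all2 (tot K) cs Gs \<Longrightarrow>
  list_all2 (tot K) (map (\<lambda>c. e_sub c (e_const 1)) cs) (map (\<lambda>G xs. G xs - 1) Gs)"
proof (induction rule: list_all2_induct)
  case Nil then show ?case by simp
next
  case (Cons c cs G Gs)
  have "tot K (e_sub c (e_const 1)) (\<lambda>xs. G xs - 1)" by (rule tot_sub[OF Cons(1) tot_const])
  then show ?case using Cons(3) by simp
qed

lemma NF_Comp:
  assumes nff: "NF f" and nfg: "\<forall>g\<in>set gs. NF g"
  shows "NF (Comp f gs)"
  unfolding NF_def
proof
  fix k
  have "\<forall>g\<in>set gs. \<exists>p. tot (Suc k) (fst p) (snd p) \<and> nf g k (snd p)"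
    using nfg unfolding NF_def by auto
  then obtain HG where HG: "\<forall>g\<in>set gs. tot (Suc k) (fst (HG g)) (snd (HG g)) \<and> nf g k (snd (HG g))"
    by (metis bchoice)
  define hs where "hs = map (fst \<circ> HG) gs"
  define Fs where "Fs = map (snd \<circ> HG) gs"
  have lhs: "length hs = length gs" "length Fs = length gs" by (auto simp: hs_def Fs_def)
  have A: "list_all2 (tot (Suc k)) hs Fs"
    using HG by (auto simp: list_all2_conv_all_nth hs_def Fs_def)
  have nfi: "\<And>i. i < length gs \<Longrightarrow> nf (gs!i) k (Fs!i)"
    using HG by (auto simp: Fs_def)
  obtain hf Ff where hf: "tot (Suc (length gs)) hf Ff" and nf_f: "nf f (length gs) Ff"
    using nff unfolding NF_def by blast
  define h where "h = e_mult (Comp hf (Proj 0 # map (\<lambda>c. e_sub c (e_const 1)) hs)) (e_sg (prodl hs))"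
  define ys where "ys t xs = map (\<lambda>G. G (t#xs) - 1) Fs" for t xs
  define F where "F xs = Ff (xs!0 # map (\<lambda>G. G xs - 1) Fs) *
     (if prod_list (map (\<lambda>G. G xs) Fs) = 0 then 0 else 1)" for xs
  have "tot (Suc k) h (\<lambda>xs. Ff (map (\<lambda>G. G xs) ((\<lambda>xs. xs!0) # map (\<lambda>G xs. G xs - 1) Fs)) *
     (if prod_list (map (\<lambda>G. G xs) Fs) = 0 then 0 else 1))"
    unfolding h_def
  proof (rule tot_mult[OF tot_comp[OF hf] tot_sg[OF tot_prodl[OF A]]])
    show "length (Proj 0 # map (\<lambda>c. e_sub c (e_const 1)) hs) = Suc (length gs)" using lhs by simp
    show "list_all2 (\<lambda>g G. tot (Suc k) g G) (Proj 0 # map (\<lambda>c. e_sub c (e_const 1)) hs)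
          ((\<lambda>xs. xs!0) # map (\<lambda>G xs. G xs - 1) Fs)"
      using all2_pred[OF A] tot_proj[of 0 "Suc k"] by simp
  qed
  then have toth: "tot (Suc k) h F" by (rule tot_cong) (simp add: F_def comp_def)
  have key: "F (t#xs) \<noteq> 0 \<longleftrightarrow> (\<forall>i<length gs. (Fs!i) (t#xs) \<noteq> 0) \<and> Ff (t # ys t xs) \<noteq> 0" for t xs
    unfolding F_def ys_def using lhs by (auto simp: prod_list_zero_iff in_set_conv_nth image_iff) (metis nth_mem neq0_conv)
  have keyv: "F (t#xs) \<noteq> 0 \<Longrightarrow> F (t#xs) = Ff (t # ys t xs)" for t xs
    unfolding F_def ys_def by (auto split: if_splits)
  have lys: "length (ys t xs) = length gs" for t xs using lhs by (simp add: ys_def)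
  have ysi: "(Fs!i) (t#xs) \<noteq> 0 \<Longrightarrow> i < length gs \<Longrightarrow> (Fs!i) (t#xs) = Suc (ys t xs ! i)" for i t xs
    using lhs by (simp add: ys_def)
  have "nf (Comp f gs) k F"
    unfolding nf_def
  proof (intro conjI allI impI)
    fix t xs y assume l: "length xs = k" and F: "F (t#xs) = Suc y"
    then have nz: "\<forall>i<length gs. (Fs!i) (t#xs) \<noteq> 0" and ff: "Ff (t # ys t xs) = Suc y"
      using key[of t xs] keyv[of t xs] by auto
    show "eval (Comp f gs) xs y"
    proof (rule eval_Comp[OF lys])
      show "\<forall>i<length gs. eval (gs ! i) xs (ys t xs ! i)"
        using nz ysi nfi nf_sound l by metis
      show "eval f (ys t xs) y" using nf_sound[OF nf_f lys ff] .
    qed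
  next
    fix xs y assume l: "length xs = k" and ev: "eval (Comp f gs) xs y"
    then obtain zs where lz: "length zs = length gs" and evz: "\<forall>i<length gs. eval (gs ! i) xs (zs ! i)"
      and evf: "eval f zs y" by (auto elim: evCompE)
    have "\<forall>i<length gs. \<exists>t0. \<forall>t\<ge>t0. (Fs!i) (t#xs) = Suc (zs!i)"
      using nf_ev[OF nfi l] evz by blast
    then obtain t1 where t1: "\<forall>t\<ge>t1. \<forall>i<length gs. (Fs!i) (t#xs) = Suc (zs!i)"
      using ev_all[of "length gs" "\<lambda>i t. (Fs!i) (t#xs) = Suc (zs!i)"] by blast
    obtain t2 where t2: "\<forall>t\<ge>t2. Ff (t#zs) = Suc y" using nf_ev[OF nf_f lz evf] by blast
    define t where "t = max t1 t2"
    have "ys t xs = zs"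
      by (rule nth_equalityI) (use lys lz t1 lhs in \<open>auto simp: ys_def t_def\<close>)
    then have "F (t#xs) \<noteq> 0" using key t1 t2 by (simp add: t_def)
    then show "\<exists>t. F (t#xs) \<noteq> 0" by blast
  next
    fix t t' xs assume l: "length xs = k" and nz: "F (t#xs) \<noteq> 0" and tt: "t \<le> t'"
    then have nzi: "\<forall>i<length gs. (Fs!i) (t#xs) \<noteq> 0" and ff: "Ff (t # ys t xs) \<noteq> 0"
      using key by auto
    have eqi: "\<forall>i<length gs. (Fs!i) (t'#xs) = (Fs!i) (t#xs)"
      using nf_mono_eq[OF nfi l] nzi tt by blast
    then have "ys t' xs = ys t xs" by (rule_tac nth_equalityI) (auto simp: ys_def lhs)
    moreover have "Ff (t' # ys t xs) \<noteq> 0" using nf_mono[OF nf_f lys ff tt] .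
    ultimately show "F (t'#xs) \<noteq> 0" using key eqi nzi by simp
  qed
  with toth show "\<exists>h F. tot (Suc k) h F \<and> nf (Comp f gs) k F" by blast
qed




lemma NF_PrimRec:
  assumes nff: "NF f" and nfg: "NF g"
  shows "NF (PrimRec f g)"
  unfolding NF_def
proof
  fix k show "\<exists>h F. tot (Suc k) h F \<and> nf (PrimRec f g) k F"
  proof (cases k)
    case 0 show ?thesis
    proof (intro nf_never notI)
      fix xs y assume "length xs = k" "eval (PrimRec f g) xs y"
      then show False using 0 by (cases rule: evPrE) auto
    qed
  next
    case (Suc k')
    obtain hf Ff where hf: "tot (Suc k') hf Ff" and nf_f: "nf f k' Ff"
      using nff unfolding NF_def by blast
    obtain hg Fg where hg: "tot (Suc (Suc (Suc k'))) hg Fg" and nf_g: "nf g (Suc (Suc k')) Fg"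
      using nfg unfolding NF_def by blast
    define P where "P t n xs' = rec_nat (Ff (t#xs'))
       (\<lambda>i y. (if y = 0 then 0 else 1) * Fg (t # (y - 1) # i # xs')) n" for t n xs'
    have P0: "P t 0 xs' = Ff (t#xs')" for t xs' by (simp add: P_def)
    have PS: "P t (Suc n) xs' = (if P t n xs' = 0 then 0 else 1) * Fg (t # (P t n xs' - 1) # n # xs')"
      for t n xs' by (simp add: P_def)
    define gQ where "gQ = e_mult (e_sg (Proj 0))
       (Comp hg ([Proj 2, e_sub (Proj 0) (e_const 1), Proj 1] @ map Proj [3..<Suc (Suc (Suc k'))]))"
    have "tot (Suc (Suc (Suc k'))) gQ (\<lambda>zs. (if zs!0 = 0 then 0 else 1) *
        Fg (map (\<lambda>E. E zs) [\<lambda>zs. zs!2, \<lambda>zs. zs!0 - 1, \<lambda>zs. zs!1] @ drop 3 zs))"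
      unfolding gQ_def
      by (rule tot_mult[OF tot_sg[OF tot_proj] tot_comp_app[OF hg]])
         (auto intro!: tot_proj tot_sub tot_const tot_one)
    from tot_primrec[OF hf this] have
      "tot (Suc (Suc k')) (PrimRec hf gQ) (\<lambda>zs. P (hd (tl zs)) (hd zs) (tl (tl zs)))"
    proof (rule tot_cong)
      fix zs :: "nat list" assume "length zs = Suc (Suc k')"
      then obtain n t xs' where zs: "zs = n # t # xs'" by (auto simp: length_Suc_conv)
      show "rec_nat (Ff (tl zs)) (\<lambda>i y. (if (y # i # tl zs) ! 0 = 0 then 0 else 1) *
          Fg (map (\<lambda>E. E (y # i # tl zs)) [\<lambda>zs. zs ! 2, \<lambda>zs. zs ! 0 - 1, \<lambda>zs. zs ! 1] @
              drop 3 (y # i # tl zs))) (hd zs) = P (hd (tl zs)) (hd zs) (tl (tl zs))"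
        by (simp add: zs P_def numeral_3_eq_3 numeral_2_eq_2)
    qed
    then have "tot (Suc k) (Comp (PrimRec hf gQ) ([Proj 1, Proj 0] @ map Proj [2..<Suc k]))
       (\<lambda>xs. (\<lambda>zs. P (hd (tl zs)) (hd zs) (tl (tl zs))) (map (\<lambda>E. E xs) [\<lambda>zs. zs!1, \<lambda>zs. zs!0] @ drop 2 xs))"
      by (rule tot_comp_app) (use Suc in \<open>auto intro!: tot_proj\<close>)
    then have toth: "tot (Suc k) (Comp (PrimRec hf gQ) ([Proj 1, Proj 0] @ map Proj [2..<Suc k]))
       (\<lambda>xs. P (xs!0) (hd (tl xs)) (tl (tl xs)))"
      by (rule tot_cong) (use Suc in \<open>auto simp: length_Suc_conv numeral_2_eq_2\<close>)
    have sound: "length xs' = k' \<Longrightarrow> P t n xs' = Suc y \<Longrightarrow> eval (PrimRec f g) (n#xs') y" for t n xs' y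
    proof (induction n arbitrary: y)
      case 0 then show ?case using nf_sound[OF nf_f] by (auto simp: P0 intro: eval_Pr0)
    next
      case (Suc n)
      then obtain y0 where y0: "P t n xs' = Suc y0" and fg: "Fg (t # y0 # n # xs') = Suc y"
        by (cases "P t n xs'") (auto simp: PS)
      show ?case
        by (rule eval_PrS[OF Suc.IH[OF Suc.prems(1) y0]]) (rule nf_sound[OF nf_g _ fg], simp add: Suc.prems)
    qed
    have compl: "length xs' = k' \<Longrightarrow> eval (PrimRec f g) (n#xs') y \<Longrightarrow> \<exists>t0. \<forall>t\<ge>t0. P t n xs' = Suc y"
      for n xs' y
    proof (induction n arbitrary: y)
      case 0
      from 0(2) have "eval f xs' y" by (cases rule: evPrE) auto
      then show ?case using nf_ev[OF nf_f 0(1)] by (simp add: P0)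
    next
      case (Suc n)
      from Suc.prems(2) obtain y0 where e1: "eval (PrimRec f g) (n#xs') y0" and e2: "eval g (y0#n#xs') y"
        by (cases rule: evPrE) auto
      obtain t1 where t1: "\<forall>t\<ge>t1. P t n xs' = Suc y0" using Suc.IH[OF Suc.prems(1) e1] by blast
      obtain t2 where t2: "\<forall>t\<ge>t2. Fg (t # y0 # n # xs') = Suc y"
        using nf_ev[OF nf_g _ e2] Suc.prems(1) by auto
      show ?case by (rule exI[of _ "max t1 t2"]) (use t1 t2 in \<open>auto simp: PS\<close>)
    qed
    have mono: "length xs' = k' \<Longrightarrow> P t n xs' \<noteq> 0 \<Longrightarrow> t \<le> t' \<Longrightarrow> P t' n xs' = P t n xs'" for t t' n xs'
    proof (induction n)
      case 0
      then have "Ff (t#xs') \<noteq> 0" by (simp add: P0)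
      then show ?case by (simp add: P0 nf_mono_eq[OF nf_f 0(1) _ 0(3)])
    next
      case (Suc n)
      then have a: "P t n xs' \<noteq> 0" and b: "Fg (t # (P t n xs' - 1) # n # xs') \<noteq> 0"
        by (auto simp: PS split: if_splits)
      have "P t' n xs' = P t n xs'" using Suc.IH[OF Suc.prems(1) a Suc.prems(3)] .
      moreover have "Fg (t' # (P t n xs' - 1) # n # xs') = Fg (t # (P t n xs' - 1) # n # xs')"
        using nf_mono_eq[OF nf_g _ b Suc.prems(3)] Suc.prems(1) by simp
      ultimately show ?case by (simp add: PS)
    qed
    have "nf (PrimRec f g) k (\<lambda>xs. P (xs!0) (hd (tl xs)) (tl (tl xs)))"
      unfolding nf_def
    proof (intro conjI allI impI)
      fix t xs y assume "length xs = k" "P ((t # xs) ! 0) (hd (tl (t # xs))) (tl (tl (t # xs))) = Suc y"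
      then show "eval (PrimRec f g) xs y" using sound Suc by (cases xs) auto
    next
      fix xs y assume l: "length xs = k" and ev: "eval (PrimRec f g) xs y"
      obtain n xs' where xs: "xs = n # xs'" and l': "length xs' = k'" using l Suc by (cases xs) auto
      obtain t0 where "\<forall>t\<ge>t0. P t n xs' = Suc y" using compl[OF l'] ev xs by blast
      then have "P t0 n xs' \<noteq> 0" by simp
      then show "\<exists>t. P ((t # xs) ! 0) (hd (tl (t # xs))) (tl (tl (t # xs))) \<noteq> 0"
        by (rule_tac x=t0 in exI) (simp add: xs)
    next
      fix t t' xs assume l: "length xs = k" and nz: "P ((t # xs) ! 0) (hd (tl (t # xs))) (tl (tl (t # xs))) \<noteq> 0" and tt: "t \<le> t'"
      obtain n xs' where xs: "xs = n # xs'" and l': "length xs' = k'" using l Suc by (cases xs) auto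
      have "P t n xs' \<noteq> 0" using nz by (simp add: xs)
      from mono[OF l' this tt] this
      show "P ((t' # xs) ! 0) (hd (tl (t' # xs))) (tl (tl (t' # xs))) \<noteq> 0" by (simp add: xs)
    qed
    with toth show ?thesis by blast
  qed
qed



lemma prod_ind: "(\<Prod>m<(n::nat). if P m then 1 else (0::nat)) = (if \<forall>m<n. P m then 1 else 0)"
proof (induction n)
  case 0 then show ?case by simp
next
  case (Suc n)
  have "(\<forall>m<Suc n. P m) = ((\<forall>m<n. P m) \<and> P n)" by (auto simp: less_Suc_eq)
  then show ?case by (simp add: Suc.IH)
qed

lemma sum_uniq:
  assumes "c n0" "n0 < t" "\<And>n. c n \<Longrightarrow> n = n0"
  shows "(\<Sum>n<t. if c n then Suc n else 0) = Suc n0"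
proof -
  have "(\<Sum>n<t. if c n then Suc n else 0) = (\<Sum>n<t. if n = n0 then Suc n0 else 0)"
  proof (rule sum.cong)
    fix n assume "n \<in> {..<t}"
    show "(if c n then Suc n else 0) = (if n = n0 then Suc n0 else 0)"
    proof (cases "c n")
      case True then have "n = n0" by (rule assms(3))
      then show ?thesis using True by simp
    next
      case False then have "n \<noteq> n0" using assms(1) by blast
      then show ?thesis using False by simp
    qed
  qed (rule refl)
  also have "\<dots> = Suc n0" using assms(2) by simp
  finally show ?thesis .
qed

lemma sum_nz: "(\<Sum>n<t. if c n then Suc n else 0) \<noteq> 0 \<Longrightarrow> \<exists>n<t. c n"
proof (rule ccontr)
  assume h: "(\<Sum>n<t. if c n then Suc n else 0) \<noteq> 0" and "\<not> (\<exists>n<t. c n)"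
  then have "\<forall>n\<in>{..<t}. (if c n then Suc n else 0) = 0" by auto
  then have "(\<Sum>n<t. if c n then Suc n else 0) = 0" by (rule sum.neutral)
  with h show False by simp
qed

lemma NF_Mu:
  assumes nff: "NF f"
  shows "NF (Mu f)"
  unfolding NF_def
proof
  fix k
  obtain hf Ff where hf: "tot (Suc (Suc k)) hf Ff" and nf_f: "nf f (Suc k) Ff"
    using nff unfolding NF_def by blast
  define cond where "cond t xs n \<longleftrightarrow> Ff (t#n#xs) = 1 \<and> (\<forall>m<n. 2 \<le> Ff (t#m#xs))" for t xs n
  define S where "S t xs = (\<Sum>n<t. if cond t xs n then Suc n else 0)" for t xs
  define bc where "bc = e_sg (e_sub (Comp hf ([Proj 2, Proj 0] @ map Proj [3..<Suc (Suc (Suc k))])) (e_const 1))"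
  have tbc: "tot (Suc (Suc (Suc k))) bc (\<lambda>zs. if Ff (map (\<lambda>E. E zs) [\<lambda>zs. zs!2, \<lambda>zs. zs!0] @ drop 3 zs) - 1 = 0 then 0 else 1)"
    unfolding bc_def
    by (rule tot_sg[OF tot_sub[OF tot_comp_app[OF hf] tot_const]]) (auto intro!: tot_proj)
  define cc where "cc = e_mult (e_mult (e_eq (Comp hf ([Proj 1, Proj 0] @ map Proj [2..<Suc (Suc k)])) (e_const 1))
      (e_bprod (Suc (Suc k)) (Proj 0) bc)) (Comp Succ [Proj 0])"
  have tcc: "tot (Suc (Suc k)) cc (\<lambda>zs. ((if Ff (map (\<lambda>E. E zs) [\<lambda>zs. zs!1, \<lambda>zs. zs!0] @ drop 2 zs) = 1 then 1 else 0) *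
     (\<Prod>m<zs!0. (\<lambda>zs. if Ff (map (\<lambda>E. E zs) [\<lambda>zs. zs!2, \<lambda>zs. zs!0] @ drop 3 zs) - 1 = 0 then 0 else 1) (m # zs)))
     * Suc (zs!0))"
    unfolding cc_def
    by (rule tot_mult[OF tot_mult[OF tot_eq[OF tot_comp_app[OF hf] tot_const] tot_bprod[OF tot_proj tbc]] tot_succ[OF tot_proj]])
      (auto intro!: tot_proj)
  have ccv: "length xs = k \<Longrightarrow> ((if Ff (map (\<lambda>E. E zs) [\<lambda>zs. zs!1, \<lambda>zs. zs!0] @ drop 2 zs) = 1 then 1 else 0) *
     (\<Prod>m<zs!0. (\<lambda>zs. if Ff (map (\<lambda>E. E zs) [\<lambda>zs. zs!2, \<lambda>zs. zs!0] @ drop 3 zs) - 1 = 0 then 0 else 1) (m # zs)))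
     * Suc (zs!0) = (if cond t xs n then Suc n else 0)" if "zs = n # t # xs" for zs n t xs
  proof -
    have "(\<Prod>m<n. if Ff (t # m # xs) - 1 = 0 then 0 else (1::nat)) = (\<Prod>m<n. if 2 \<le> Ff (t # m # xs) then 1 else 0)"
      by (rule prod.cong) auto
    then show ?thesis using that by (simp add: prod_ind cond_def numeral_2_eq_2 numeral_3_eq_3)
  qed
  define h where "h = e_bsum (Suc k) (Proj 0) cc"
  have "tot (Suc k) h (\<lambda>xs. \<Sum>m<xs!0. (\<lambda>zs. ((if Ff (map (\<lambda>E. E zs) [\<lambda>zs. zs!1, \<lambda>zs. zs!0] @ drop 2 zs) = 1 then 1 else 0) *
     (\<Prod>m<zs!0. (\<lambda>zs. if Ff (map (\<lambda>E. E zs) [\<lambda>zs. zs!2, \<lambda>zs. zs!0] @ drop 3 zs) - 1 = 0 then 0 else 1) (m # zs)))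
     * Suc (zs!0)) (m # xs))"
    unfolding h_def by (rule tot_bsum[OF tot_proj tcc]) simp
  then have toth: "tot (Suc k) h (\<lambda>zs. S (hd zs) (tl zs))"
  proof (rule tot_cong)
    fix zs :: "nat list" assume "length zs = Suc k"
    then obtain t xs where zs: "zs = t # xs" and l: "length xs = k" by (cases zs) auto
    show "(\<Sum>m<zs!0. (\<lambda>zs. ((if Ff (map (\<lambda>E. E zs) [\<lambda>zs. zs!1, \<lambda>zs. zs!0] @ drop 2 zs) = 1 then 1 else 0) *
     (\<Prod>m<zs!0. (\<lambda>zs. if Ff (map (\<lambda>E. E zs) [\<lambda>zs. zs!2, \<lambda>zs. zs!0] @ drop 3 zs) - 1 = 0 then 0 else 1) (m # zs)))
     * Suc (zs!0)) (m # zs)) = S (hd zs) (tl zs)"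
      unfolding S_def zs by (rule sum.cong) (use ccv[OF _ l] in auto)
  qed
  have uniq: "cond t xs n \<Longrightarrow> cond t xs m \<Longrightarrow> n = m" for t xs n m
  proof -
    assume a: "cond t xs n" "cond t xs m"
    show "n = m"
    proof (rule linorder_cases[of n m])
      assume "n < m" then have "2 \<le> Ff (t#n#xs)" using a(2) by (simp add: cond_def)
      then show ?thesis using a(1) by (simp add: cond_def)
    next
      assume "m < n" then have "2 \<le> Ff (t#m#xs)" using a(1) by (simp add: cond_def)
      then show ?thesis using a(2) by (simp add: cond_def)
    qed
  qed
  have Sv: "cond t xs n0 \<Longrightarrow> n0 < t \<Longrightarrow> S t xs = Suc n0" for t xs n0
  proof -
    assume a: "cond t xs n0" "n0 < t"
    show ?thesis unfolding S_def by (rule sum_uniq[of "cond t xs" n0 t, OF a(1) a(2)]) (rule uniq[OF _ a(1)])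
  qed
  have "nf (Mu f) k (\<lambda>zs. S (hd zs) (tl zs))"
    unfolding nf_def
  proof (intro conjI allI impI)
    fix t xs y assume l: "length xs = k" and Sy: "S (hd (t # xs)) (tl (t # xs)) = Suc y"
    have "S t xs \<noteq> 0" using Sy by simp
    then have "\<exists>n<t. cond t xs n" unfolding S_def by (rule sum_nz)
    then obtain n0 where n0: "n0 < t" "cond t xs n0" by blast
    then have y: "y = n0" using Sv[OF n0(2) n0(1)] Sy by simp
    have "eval f (n0 # xs) 0" using n0(2) nf_sound[OF nf_f, of "n0#xs" t 0] l by (simp add: cond_def)
    moreover have "\<forall>m<n0. \<exists>k>0. eval f (m # xs) k"
    proof (intro allI impI)
      fix m assume "m < n0"
      then have "2 \<le> Ff (t#m#xs)" using n0(2) by (simp add: cond_def)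
      then have "Ff (t#m#xs) = Suc (Ff (t#m#xs) - 1)" "Ff (t#m#xs) - 1 > 0" by auto
      then show "\<exists>k>0. eval f (m # xs) k" using nf_sound[OF nf_f, of "m#xs" t "Ff (t#m#xs) - 1"] l
        by (intro exI[of _ "Ff (t#m#xs) - 1"]) auto
    qed
    ultimately show "eval (Mu f) xs y" unfolding y by (rule eval_Mu)
  next
    fix xs y assume l: "length xs = k" and ev: "eval (Mu f) xs y"
    from ev have e0: "eval f (y # xs) 0" and em: "\<forall>m<y. \<exists>k>0. eval f (m # xs) k"
      by (auto elim: evMuE)
    obtain t1 where t1: "\<forall>t\<ge>t1. Ff (t#y#xs) = Suc 0" using nf_ev[OF nf_f _ e0] l by auto
    have "\<forall>m<y. \<exists>t0. \<forall>t\<ge>t0. 2 \<le> Ff (t#m#xs)"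
    proof (intro allI impI)
      fix m assume "m < y"
      then obtain kk where "kk > 0" "eval f (m # xs) kk" using em by blast
      moreover obtain t0 where "\<forall>t\<ge>t0. Ff (t#m#xs) = Suc kk" using nf_ev[OF nf_f, of "m#xs" kk] l calculation(2) by auto
      ultimately show "\<exists>t0. \<forall>t\<ge>t0. 2 \<le> Ff (t#m#xs)" by (intro exI[of _ t0]) auto
    qed
    then obtain t2 where t2: "\<forall>t\<ge>t2. \<forall>m<y. 2 \<le> Ff (t#m#xs)"
      using ev_all[of y "\<lambda>m t. 2 \<le> Ff (t#m#xs)"] by blast
    define t where "t = max (max t1 t2) (Suc y)"
    have "cond t xs y" using t1 t2 by (simp add: cond_def t_def)
    then have "S t xs \<noteq> 0" using Sv[of t xs y] by (simp add: t_def)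
    then show "\<exists>t. S (hd (t # xs)) (tl (t # xs)) \<noteq> 0" by auto
  next
    fix t t' xs assume l: "length xs = k" and nz: "S (hd (t # xs)) (tl (t # xs)) \<noteq> 0" and tt: "t \<le> t'"
    have "S t xs \<noteq> 0" using nz by simp
    then have "\<exists>n<t. cond t xs n" unfolding S_def by (rule sum_nz)
    then obtain n0 where n0: "n0 < t" "cond t xs n0" by blast
    have e1: "Ff (t'#n0#xs) = Ff (t#n0#xs)"
      using nf_mono_eq[OF nf_f, of "n0#xs" t t'] n0(2) l tt by (simp add: cond_def)
    have e2: "Ff (t'#m#xs) = Ff (t#m#xs)" if "m < n0" for m
    proof -
      have "2 \<le> Ff (t#m#xs)" using n0(2) that by (simp add: cond_def)
      then show ?thesis using nf_mono_eq[OF nf_f, of "m#xs" t t'] l tt by simp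
    qed
    have "cond t' xs n0" using n0(2) e1 e2 by (simp add: cond_def)
    then have "S t' xs \<noteq> 0" using Sv[of t' xs n0] n0(1) tt by simp
    then show "S (hd (t' # xs)) (tl (t' # xs)) \<noteq> 0" by simp
  qed
  with toth show "\<exists>h F. tot (Suc k) h F \<and> nf (Mu f) k F" by blast
qed

theorem NF_all: "NF c"
proof (induction c)
  case Zero then show ?case by (rule NF_Zero)
next
  case Succ then show ?case by (rule NF_Succ)
next
  case (Proj i) then show ?case by (rule NF_Proj)
next
  case (Comp f gs) then show ?case by (intro NF_Comp) auto
next
  case (PrimRec f g) then show ?case by (rule NF_PrimRec)
next
  case (Mu f) then show ?case by (rule NF_Mu)
qed



lemma tot_bex:
  assumes "tot k b B" "tot (Suc k) g G" "\<And>m xs. length xs = k \<Longrightarrow> G (m#xs) = (if P m xs then 1 else 0)"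
  shows "tot k (e_sg (e_bsum k b g)) (\<lambda>xs. if \<exists>m<B xs. P m xs then 1 else 0)"
proof (rule tot_cong[OF tot_sg[OF tot_bsum[OF assms(1,2)]]])
  fix xs :: "nat list" assume l: "length xs = k"
  have "(\<Sum>m<B xs. G (m # xs)) = (\<Sum>m<B xs. if P m xs then 1 else 0)"
    by (rule sum.cong) (simp_all add: assms(3) l)
  then show "(if (\<Sum>m<B xs. G (m # xs)) = 0 then 0 else 1) = (if \<exists>m<B xs. P m xs then 1 else 0)"
    by (simp; blast)
qed

lemma tot_ball:
  assumes "tot k b B" "tot (Suc k) g G" "\<And>m xs. length xs = k \<Longrightarrow> G (m#xs) = (if P m xs then 1 else 0)"
  shows "tot k (e_bprod k b g) (\<lambda>xs. if \<forall>m<B xs. P m xs then 1 else 0)"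
proof (rule tot_cong[OF tot_bprod[OF assms(1,2)]])
  fix xs :: "nat list" assume l: "length xs = k"
  have "(\<Prod>m<B xs. G (m # xs)) = (\<Prod>m<B xs. if P m xs then 1 else 0)"
    by (rule prod.cong) (simp_all add: assms(3) l)
  then show "(\<Prod>m<B xs. G (m # xs)) = (if \<forall>m<B xs. P m xs then 1 else 0)"
    by (simp add: prod_ind)
qed

lemma tot_and:
  "tot k a (\<lambda>xs. if P xs then 1 else 0) \<Longrightarrow> tot k b (\<lambda>xs. if Q xs then 1 else 0) \<Longrightarrow>
   tot k (e_mult a b) (\<lambda>xs. if P xs \<and> Q xs then 1 else 0)"
  by (rule tot_cong[OF tot_mult]) auto

lemma tot_or:
  "tot k a (\<lambda>xs. if P xs then 1 else 0) \<Longrightarrow> tot k b (\<lambda>xs. if Q xs then 1 else 0) \<Longrightarrow>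
   tot k (e_sg (e_add a b)) (\<lambda>xs. if P xs \<or> Q xs then 1 else 0)"
  by (rule tot_cong[OF tot_sg[OF tot_add]]) (auto split: if_splits)

lemma tot_nz:
  "tot k a A \<Longrightarrow> tot k (e_sg a) (\<lambda>xs. if A xs \<noteq> 0 then 1 else 0)"
  by (rule tot_cong[OF tot_sg]) auto

lemma tot_app1: "tot 1 c F \<Longrightarrow> tot k e E \<Longrightarrow> tot k (Comp c [e]) (\<lambda>xs. F [E xs])"
  using tot_comp[of 1 c F "[e]" k "[E]"] by simp

lemma tot_app2: "tot 2 c F \<Longrightarrow> tot k a A \<Longrightarrow> tot k b B \<Longrightarrow> tot k (Comp c [a, b]) (\<lambda>xs. F [A xs, B xs])"
  using tot_comp[of 2 c F "[a, b]" k "[A, B]"] by simp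

lemma tot_succ1: "tot k e E \<Longrightarrow> tot k (e_add e (e_const 1)) (\<lambda>xs. Suc (E xs))"
  by (rule tot_cong[OF tot_add[OF _ tot_const]]) auto


definition Rsem :: "(nat \<Rightarrow> nat) \<Rightarrow> (nat \<Rightarrow> nat \<Rightarrow> nat) \<Rightarrow> (nat \<Rightarrow> nat) \<Rightarrow> (nat list \<Rightarrow> nat) \<Rightarrow> nat \<Rightarrow> nat \<Rightarrow> bool" where
  "Rsem f \<sigma> \<eta> FL p j \<longleftrightarrow> (\<exists>j'<Suc p. \<exists>t<Suc p. FL [t, j'] \<noteq> 0 \<and>
     (\<forall>k<Suc (\<eta> j'). (\<exists>m<Suc (\<eta> j). \<sigma> j' k = \<sigma> j m) \<or> (\<exists>i<Suc p. \<sigma> j' k = f i)))"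

lemma R_code:
  assumes cf: "tot 1 cf (\<lambda>xs. f (xs!0))" and cs: "tot 2 cs (\<lambda>xs. \<sigma> (xs!0) (xs!1))"
    and ce: "tot 1 ce (\<lambda>xs. \<eta> (xs!0))" and hL: "tot 2 hL FL"
  shows "\<exists>r. tot 2 r (\<lambda>xs. if Rsem f \<sigma> \<eta> FL (xs!0) (xs!1) then 1 else 0)"
proof -
  \<comment> \<open>body3, environment [k,t,j',p,j]; inner environment [m,k,t,j',p,j]\<close>
  have b1: "tot (Suc (Suc (Suc (Suc (Suc 0))))) (e_add (Comp ce [Proj 4]) (e_const 1)) (\<lambda>xs. Suc (\<eta> (xs!4)))"
    by (rule tot_cong[OF tot_succ1[OF tot_app1[OF ce tot_proj]]]) simp_all
  have q1: "tot (Suc (Suc (Suc (Suc (Suc (Suc 0)))))) (e_eq (Comp cs [Proj 3, Proj 1]) (Comp cs [Proj 5, Proj 0]))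
     (\<lambda>ys. if \<sigma> (ys!3) (ys!1) = \<sigma> (ys!5) (ys!0) then 1 else 0)"
    by (rule tot_cong[OF tot_eq[OF tot_app2[OF cs tot_proj tot_proj] tot_app2[OF cs tot_proj tot_proj]]]) simp_all
  have A: "tot (Suc (Suc (Suc (Suc (Suc 0))))) (e_sg (e_bsum (Suc (Suc (Suc (Suc (Suc 0))))) (e_add (Comp ce [Proj 4]) (e_const 1)) (e_eq (Comp cs [Proj 3, Proj 1]) (Comp cs [Proj 5, Proj 0]))))
     (\<lambda>xs. if \<exists>m<Suc (\<eta> (xs!4)). \<sigma> (xs!2) (xs!0) = \<sigma> (xs!4) m then 1 else 0)"
    by (rule tot_bex[OF b1 q1]) simp
  have b2: "tot (Suc (Suc (Suc (Suc (Suc 0))))) (e_add (Proj 3) (e_const 1)) (\<lambda>xs. Suc (xs!3))"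
    by (rule tot_succ1[OF tot_proj]) simp
  have q2: "tot (Suc (Suc (Suc (Suc (Suc (Suc 0)))))) (e_eq (Comp cs [Proj 3, Proj 1]) (Comp cf [Proj 0]))
     (\<lambda>ys. if \<sigma> (ys!3) (ys!1) = f (ys!0) then 1 else 0)"
    by (rule tot_cong[OF tot_eq[OF tot_app2[OF cs tot_proj tot_proj] tot_app1[OF cf tot_proj]]]) simp_all
  have B: "tot (Suc (Suc (Suc (Suc (Suc 0))))) (e_sg (e_bsum (Suc (Suc (Suc (Suc (Suc 0))))) (e_add (Proj 3) (e_const 1)) (e_eq (Comp cs [Proj 3, Proj 1]) (Comp cf [Proj 0]))))
     (\<lambda>xs. if \<exists>i<Suc (xs!3). \<sigma> (xs!2) (xs!0) = f i then 1 else 0)"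
    by (rule tot_bex[OF b2 q2]) simp
  have "\<exists>c. tot (Suc (Suc (Suc (Suc (Suc 0))))) c (\<lambda>xs. if (\<exists>m<Suc (\<eta> (xs!4)). \<sigma> (xs!2) (xs!0) = \<sigma> (xs!4) m) \<or>
       (\<exists>i<Suc (xs!3). \<sigma> (xs!2) (xs!0) = f i) then 1 else 0)" by (rule exI, rule tot_or[OF A B])
  then obtain c3 where c3: "tot (Suc (Suc (Suc (Suc (Suc 0))))) c3 (\<lambda>xs. if (\<exists>m<Suc (\<eta> (xs!4)). \<sigma> (xs!2) (xs!0) = \<sigma> (xs!4) m) \<or>
       (\<exists>i<Suc (xs!3). \<sigma> (xs!2) (xs!0) = f i) then 1 else 0)" by blast
  \<comment> \<open>body2, environment [t,j',p,j]\<close>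
  have fl: "tot (Suc (Suc (Suc (Suc 0)))) (e_sg (Comp hL [Proj 0, Proj 1])) (\<lambda>xs. if FL [xs!0, xs!1] \<noteq> 0 then 1 else 0)"
    by (rule tot_nz[OF tot_app2[OF hL tot_proj tot_proj]]) simp_all
  have b3: "tot (Suc (Suc (Suc (Suc 0)))) (e_add (Comp ce [Proj 1]) (e_const 1)) (\<lambda>xs. Suc (\<eta> (xs!1)))"
    by (rule tot_cong[OF tot_succ1[OF tot_app1[OF ce tot_proj]]]) simp_all
  have "\<exists>c. tot (Suc (Suc (Suc (Suc 0)))) c (\<lambda>xs. if \<forall>k<Suc (\<eta> (xs!1)). (\<exists>m<Suc (\<eta> (xs!3)). \<sigma> (xs!1) k = \<sigma> (xs!3) m) \<or>
       (\<exists>i<Suc (xs!2). \<sigma> (xs!1) k = f i) then 1 else 0)" by (rule exI, rule tot_ball[OF b3 c3]) simp_all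
  then obtain c2 where c2: "tot (Suc (Suc (Suc (Suc 0)))) c2 (\<lambda>xs. if \<forall>k<Suc (\<eta> (xs!1)). (\<exists>m<Suc (\<eta> (xs!3)). \<sigma> (xs!1) k = \<sigma> (xs!3) m) \<or>
       (\<exists>i<Suc (xs!2). \<sigma> (xs!1) k = f i) then 1 else 0)" by blast
  obtain c2' where c2': "tot (Suc (Suc (Suc (Suc 0)))) c2' (\<lambda>xs. if FL [xs!0, xs!1] \<noteq> 0 \<and> (\<forall>k<Suc (\<eta> (xs!1)). (\<exists>m<Suc (\<eta> (xs!3)). \<sigma> (xs!1) k = \<sigma> (xs!3) m) \<or>
       (\<exists>i<Suc (xs!2). \<sigma> (xs!1) k = f i)) then 1 else 0)"
    using tot_and[OF fl c2] by blast
  \<comment> \<open>body1, environment [j',p,j]\<close>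
  have b4: "tot (Suc (Suc (Suc 0))) (e_add (Proj 1) (e_const 1)) (\<lambda>xs. Suc (xs!1))"
    by (rule tot_succ1[OF tot_proj]) simp
  have "\<exists>c. tot (Suc (Suc (Suc 0))) c (\<lambda>xs. if \<exists>t<Suc (xs!1). FL [t, xs!0] \<noteq> 0 \<and> (\<forall>k<Suc (\<eta> (xs!0)). (\<exists>m<Suc (\<eta> (xs!2)). \<sigma> (xs!0) k = \<sigma> (xs!2) m) \<or>
       (\<exists>i<Suc (xs!1). \<sigma> (xs!0) k = f i)) then 1 else 0)" by (rule exI, rule tot_bex[OF b4 c2']) simp_all
  then obtain c1 where c1: "tot (Suc (Suc (Suc 0))) c1 (\<lambda>xs. if \<exists>t<Suc (xs!1). FL [t, xs!0] \<noteq> 0 \<and> (\<forall>k<Suc (\<eta> (xs!0)). (\<exists>m<Suc (\<eta> (xs!2)). \<sigma> (xs!0) k = \<sigma> (xs!2) m) \<or>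
       (\<exists>i<Suc (xs!1). \<sigma> (xs!0) k = f i)) then 1 else 0)" by blast
  \<comment> \<open>top, environment [p,j]\<close>
  have b5: "tot (Suc (Suc 0)) (e_add (Proj 0) (e_const 1)) (\<lambda>xs. Suc (xs!0))"
    by (rule tot_succ1[OF tot_proj]) simp
  have "\<exists>c. tot (Suc (Suc 0)) c (\<lambda>xs. if \<exists>j'<Suc (xs!0). \<exists>t<Suc (xs!0). FL [t, j'] \<noteq> 0 \<and> (\<forall>k<Suc (\<eta> j'). (\<exists>m<Suc (\<eta> (xs!1)). \<sigma> j' k = \<sigma> (xs!1) m) \<or>
       (\<exists>i<Suc (xs!0). \<sigma> j' k = f i)) then 1 else 0)" by (rule exI, rule tot_bex[OF b5 c1]) simp_all
  then obtain c0 where c0: "tot (Suc (Suc 0)) c0 (\<lambda>xs. if \<exists>j'<Suc (xs!0). \<exists>t<Suc (xs!0). FL [t, j'] \<noteq> 0 \<and> (\<forall>k<Suc (\<eta> j'). (\<exists>m<Suc (\<eta> (xs!1)). \<sigma> j' k = \<sigma> (xs!1) m) \<or>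
       (\<exists>i<Suc (xs!0). \<sigma> j' k = f i)) then 1 else 0)" by blast
  then show ?thesis unfolding Rsem_def numeral_2_eq_2 by blast
qed


lemma Mu_dom:
  assumes r: "tot 2 r (\<lambda>xs. if P (xs!0) (xs!1) then 0 else 1)"
  shows "(\<exists>y. eval (Mu r) [j] y) \<longleftrightarrow> (\<exists>p. P p j)"
proof
  assume "\<exists>y. eval (Mu r) [j] y"
  then obtain y where "eval (Mu r) [j] y" by blast
  then have e: "eval r [y, j] 0" by (auto elim: evMuE)
  have "eval r [y, j] (if P y j then 0 else 1)" using totD[OF r, of "[y, j]"] by simp
  with e have "(if P y j then 0 else 1) = (0::nat)" using eval_det by blast
  then show "\<exists>p. P p j" by (auto split: if_splits)
next
  assume "\<exists>p. P p j"
  define p0 where "p0 = (LEAST p. P p j)"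
  have P0: "P p0 j" unfolding p0_def using \<open>\<exists>p. P p j\<close> by (metis LeastI)
  have "eval r [p0, j] 0" using totD[OF r, of "[p0, j]"] P0 by simp
  moreover have "\<forall>m<p0. \<exists>k>0. eval r [m, j] k"
  proof (intro allI impI)
    fix m assume "m < p0"
    then have "\<not> P m j" unfolding p0_def using not_less_Least by blast
    then show "\<exists>k>0. eval r [m, j] k" using totD[OF r, of "[m, j]"] by (intro exI[of _ 1]) simp
  qed
  ultimately have "eval (Mu r) [j] p0" by (intro eval_Mu) simp_all
  then show "\<exists>y. eval (Mu r) [j] y" by blast
qed

theorem proposition3p2:
  fixes \<alpha> :: "nat \<Rightarrow> 'a::metric_space" and S :: "'a set"
  assumes "admissible_enums q \<tau>1 \<tau>2 \<sigma> \<eta>"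
    and "computable_metric_space \<alpha>"
    and "locally_computable \<alpha> q \<tau>1 \<tau>2 \<sigma> \<eta>"
    and "co_ce_closed \<alpha> q \<tau>1 \<tau>2 S"
    and "compact S"
  shows "semi_computable_compact \<alpha> q \<tau>1 \<tau>2 \<sigma> \<eta> S"
proof -
  define I where "I i = rball \<alpha> q \<tau>1 \<tau>2 i" for i
  define J where "J j = rballs \<alpha> q \<tau>1 \<tau>2 \<sigma> \<eta> j" for j
  have Jdef: "J j = (\<Union>i \<in> {\<sigma> j k | k. k \<le> \<eta> j}. I i)" for j
    by (simp add: J_def I_def rballs_def)
  have openI: "open (I i)" for i by (simp add: I_def rball_def)
  from assms(1) have cs2: "computable2 \<sigma>" and ce1: "computable1 \<eta>"
    and rng: "range (\<lambda>j. map (\<sigma> j) [0..<Suc (\<eta> j)]) = {xs. xs \<noteq> []}"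
    unfolding admissible_enums_def by auto
  from assms(4) obtain f where cf1: "computable1 f" and cS: "- S = (\<Union>i. I (f i))"
    unfolding co_ce_closed_def I_def by auto
  from assms(3,5) obtain L where Lc: "computable_compact \<alpha> q \<tau>1 \<tau>2 \<sigma> \<eta> L" and SL: "S \<subseteq> L"
    unfolding locally_computable_def by blast
  then have cL: "compact L" and ceL: "ce_set {j. L \<subseteq> J j}"
    unfolding computable_compact_def semi_computable_compact_def J_def by auto
  from ceL obtain cL where cLd: "\<And>n. L \<subseteq> J n \<longleftrightarrow> (\<exists>y. eval cL [n] y)"
    unfolding ce_set_def by auto
  obtain hL FL where hL: "tot (Suc (Suc 0)) hL FL" and nfL: "nf cL (Suc 0) FL"
    using NF_all[of cL] unfolding NF_def by blast
  obtain cf where cf: "tot 1 cf (\<lambda>xs. f (xs!0))"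
    using cf1 unfolding computable1_def computable_nat_def tot_def by blast
  obtain cs where cs: "tot 2 cs (\<lambda>xs. \<sigma> (xs!0) (xs!1))"
    using cs2 unfolding computable2_def computable_nat_def tot_def by blast
  obtain ce where ce: "tot 1 ce (\<lambda>xs. \<eta> (xs!0))"
    using ce1 unfolding computable1_def computable_nat_def tot_def by blast
  obtain R where R: "tot 2 R (\<lambda>xs. if Rsem f \<sigma> \<eta> FL (xs!0) (xs!1) then 1 else 0)"
    using R_code[OF cf cs ce] hL unfolding numeral_2_eq_2 by blast
  have r: "tot 2 (e_sub (e_const 1) R) (\<lambda>xs. if Rsem f \<sigma> \<eta> FL (xs!0) (xs!1) then 0 else 1)"
    by (rule tot_cong[OF tot_sub[OF tot_const R]]) simp
  have key: "S \<subseteq> J j \<longleftrightarrow> (\<exists>p. Rsem f \<sigma> \<eta> FL p j)" for j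
  proof
    assume "\<exists>p. Rsem f \<sigma> \<eta> FL p j"
    then obtain p j' t where fl: "FL [t, j'] \<noteq> 0"
      and cnd: "\<forall>k<Suc (\<eta> j'). (\<exists>m<Suc (\<eta> j). \<sigma> j' k = \<sigma> j m) \<or> (\<exists>i<Suc p. \<sigma> j' k = f i)"
      unfolding Rsem_def by blast
    then obtain y where "FL [t, j'] = Suc y" using not0_implies_Suc by blast
    then have "eval cL [j'] y" using nf_sound[OF nfL, of "[j']" t y] by simp
    then have LJ: "L \<subseteq> J j'" using cLd by blast
    show "S \<subseteq> J j"
    proof
      fix x assume xS: "x \<in> S"
      then have "x \<in> J j'" using SL LJ by blast
      then obtain k where k: "k \<le> \<eta> j'" and xk: "x \<in> I (\<sigma> j' k)" unfolding Jdef by blast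
      from cnd k have "(\<exists>m<Suc (\<eta> j). \<sigma> j' k = \<sigma> j m) \<or> (\<exists>i<Suc p. \<sigma> j' k = f i)" by simp
      then show "x \<in> J j"
      proof
        assume "\<exists>m<Suc (\<eta> j). \<sigma> j' k = \<sigma> j m"
        then obtain m where m: "m < Suc (\<eta> j)" "\<sigma> j' k = \<sigma> j m" by blast
        from m(1) have "m \<le> \<eta> j" by simp
        then show ?thesis using xk m(2) unfolding Jdef by blast
      next
        assume "\<exists>i<Suc p. \<sigma> j' k = f i"
        then obtain i where "\<sigma> j' k = f i" by blast
        then have "x \<in> - S" using xk cS by auto
        then show ?thesis using xS by blast
      qed
    qed
  next
    assume SJ: "S \<subseteq> J j"
    define U where "U N = J j \<union> (\<Union>i<N. I (f i))" for N
    have opn: "open (U N)" for N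
      unfolding U_def Jdef by (intro open_Un open_UN ballI openI)
    have cov: "L \<subseteq> (\<Union>N\<in>UNIV. U N)"
    proof
      fix x assume "x \<in> L"
      show "x \<in> (\<Union>N\<in>UNIV. U N)"
      proof (cases "x \<in> S")
        case True then show ?thesis using SJ unfolding U_def by blast
      next
        case False
        then obtain i where "x \<in> I (f i)" using cS by blast
        then have "x \<in> U (Suc i)" unfolding U_def by blast
        then show ?thesis by blast
      qed
    qed
    obtain D where fD: "finite D" and LD: "L \<subseteq> (\<Union>N\<in>D. U N)"
    proof (rule compactE_image[OF cL _ cov])
      show "open (U N)" if "N \<in> UNIV" for N by (rule opn)
    qed
    define N0 where "N0 = Suc (Max (insert 0 D))"
    have "U N \<subseteq> U N0" if "N \<in> D" for N
    proof -
      have "N \<le> Max (insert 0 D)" using fD that by simp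
      then have "N \<le> N0" by (simp add: N0_def)
      then show ?thesis unfolding U_def by auto
    qed
    then have LU: "L \<subseteq> U N0" using LD by blast
    define ls where "ls = map (\<sigma> j) [0..<Suc (\<eta> j)] @ map f [0..<N0]"
    have "ls \<in> range (\<lambda>j. map (\<sigma> j) [0..<Suc (\<eta> j)])" using rng by (simp add: ls_def)
    then obtain j' where j': "map (\<sigma> j') [0..<Suc (\<eta> j')] = ls" by blast
    have setls: "set ls = {\<sigma> j' k | k. k \<le> \<eta> j'}"
      unfolding j'[symmetric]
    proof
      show "set (map (\<sigma> j') [0..<Suc (\<eta> j')]) \<subseteq> {\<sigma> j' k |k. k \<le> \<eta> j'}"
        by (auto simp: less_Suc_eq_le)
      show "{\<sigma> j' k |k. k \<le> \<eta> j'} \<subseteq> set (map (\<sigma> j') [0..<Suc (\<eta> j')])"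
      proof
        fix x assume "x \<in> {\<sigma> j' k |k. k \<le> \<eta> j'}"
        then obtain k where "x = \<sigma> j' k" "k < Suc (\<eta> j')" by auto
        then show "x \<in> set (map (\<sigma> j') [0..<Suc (\<eta> j')])" by (simp del: upt_Suc)
      qed
    qed
    have "U N0 \<subseteq> J j'"
    proof
      fix x assume "x \<in> U N0"
      then consider (a) "x \<in> J j" | (b) i where "i < N0" "x \<in> I (f i)" unfolding U_def by blast
      then show "x \<in> J j'"
      proof cases
        case a
        then obtain k where "k \<le> \<eta> j" "x \<in> I (\<sigma> j k)" unfolding Jdef by blast
        moreover have "\<sigma> j k \<in> set ls" using calculation(1) by (auto simp: ls_def simp del: upt_Suc)
        ultimately show ?thesis unfolding Jdef setls[symmetric] by blast
      next
        case (b i)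
        moreover have "f i \<in> set ls" using b(1) by (auto simp: ls_def simp del: upt_Suc)
        ultimately show ?thesis unfolding Jdef setls[symmetric] by blast
      qed
    qed
    then have "L \<subseteq> J j'" using LU by blast
    then obtain y where ey: "eval cL [j'] y" using cLd by blast
    have c: "\<forall>xs y. length xs = Suc 0 \<longrightarrow> eval cL xs y \<longrightarrow> (\<exists>t. FL (t#xs) \<noteq> 0)"
      using nfL unfolding nf_def by blast
    from c[rule_format, of "[j']" y] ey obtain t where t: "FL (t # [j']) \<noteq> 0" by auto
    define p where "p = max j' (max t N0)"
    have "\<forall>k<Suc (\<eta> j'). (\<exists>m<Suc (\<eta> j). \<sigma> j' k = \<sigma> j m) \<or> (\<exists>i<Suc p. \<sigma> j' k = f i)"
    proof (intro allI impI)
      fix k assume "k < Suc (\<eta> j')"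
      then have "\<sigma> j' k \<in> set ls" unfolding j'[symmetric] by (simp del: upt_Suc)
      then have "(\<exists>m<Suc (\<eta> j). \<sigma> j' k = \<sigma> j m) \<or> (\<exists>i<N0. \<sigma> j' k = f i)"
        unfolding ls_def by (auto simp del: upt_Suc)
      moreover have "N0 \<le> Suc p" by (simp add: p_def)
      ultimately show "(\<exists>m<Suc (\<eta> j). \<sigma> j' k = \<sigma> j m) \<or> (\<exists>i<Suc p. \<sigma> j' k = f i)"
        by (meson less_le_trans)
    qed
    moreover have "j' < Suc p" "t < Suc p" by (auto simp: p_def)
    ultimately have "Rsem f \<sigma> \<eta> FL p j" unfolding Rsem_def using t by auto
    then show "\<exists>p. Rsem f \<sigma> \<eta> FL p j" by blast
  qed
  have "ce_set {j. S \<subseteq> J j}"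
    unfolding ce_set_def
    by (rule exI[of _ "Mu (e_sub (e_const 1) R)"]) (use key Mu_dom[OF r] in auto)
  then show ?thesis unfolding semi_computable_compact_def J_def using assms(5) by simp
qed


end
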